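(* Let $\phi$ be a Drinfeld $A$-module of any rank over a finite field $k$ of characteristic $p$. Then $\#\operatorname{Aut}(\phi)\equiv-1\pmod p$.
   Context: $C$ is a smooth, geometrically connected, proper curve over $\mathbb F_q$ ($q$ a power of the prime $p$), $\infty\in C$ a closed point with valuation $v_\infty$, $A=\mathcal O_C(C\setminus\{\infty\})$. Over a field $k\supseteq\mathbb F_q$, a Drinfeld $A$-module of rank $r$ is a ring homomorphism $\phi\colon A\to k\{\tau\}$ into the twisted polynomial ring ($\tau c=c^q\tau$, identified with $\mathbb F_q$-linear endomorphisms of $\mathbb G_a$) such that $\phi(a)$ has $\tau$-degree exactly $-r\deg(\infty)v_\infty(a)$. $\operatorname{Aut}(\phi)$ is the group of units of $k\{\tau\}$ commuting with all $\phi(a)$. *)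

theory Defs
  imports "HOL-Computational_Algebra.Polynomial" "HOL-Number_Theory.Cong"
begin

text \<open>The twisted polynomial ring k{tau} with tau c = c^q tau. An element
  sum_i f_i tau^i is represented by the ordinary polynomial sum_i f_i X^i;
  only the multiplication is twisted.\<close>

definition tw_mult :: "nat \<Rightarrow> 'k::comm_ring_1 poly \<Rightarrow> 'k poly \<Rightarrow> 'k poly" where
  "tw_mult q f g =
     (\<Sum>i\<le>degree f. smult (coeff f i) (monom 1 i * map_poly (\<lambda>c. c ^ (q ^ i)) g))"

definition tw_unit :: "nat \<Rightarrow> 'k::comm_ring_1 poly \<Rightarrow> bool" where
  "tw_unit q u \<longleftrightarrow> (\<exists>w. tw_mult q u w = 1 \<and> tw_mult q w u = 1)"

text \<open>Here v is v_infinity and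
  dinf = deg(infinity).\<close>
definition drinfeld_module ::
  "nat \<Rightarrow> ('a::comm_ring_1 \<Rightarrow> int) \<Rightarrow> nat \<Rightarrow> nat \<Rightarrow> ('a \<Rightarrow> 'k::comm_ring_1 poly) \<Rightarrow> bool" where
  "drinfeld_module q v dinf r \<phi> \<longleftrightarrow>
     \<phi> 1 = 1 \<and>
     (\<forall>a b. \<phi> (a + b) = \<phi> a + \<phi> b) \<and>
     (\<forall>a b. \<phi> (a * b) = tw_mult q (\<phi> a) (\<phi> b)) \<and>
     (\<forall>a. a \<noteq> 0 \<longrightarrow> \<phi> a \<noteq> 0 \<and>
           int (degree (\<phi> a)) = - int r * int dinf * v a)"

definition drinfeld_aut :: "nat \<Rightarrow> ('a \<Rightarrow> 'k::comm_ring_1 poly) \<Rightarrow> 'k poly set" where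
  "drinfeld_aut q \<phi> = {u. tw_unit q u \<and> (\<forall>a. tw_mult q u (\<phi> a) = tw_mult q (\<phi> a) u)}"

end

theory Submission
  imports Defs "HOL-Computational_Algebra.Primes"
begin

lemma coeff_tw_mult:
  assumes "q > 0"
  shows "coeff (tw_mult q f g) k =
    (\<Sum>i\<le>degree f. coeff f i * (if i \<le> k then coeff g (k - i) ^ (q ^ i) else 0))"
  unfolding tw_mult_def coeff_sum
  using assms by (intro sum.cong refl) (simp add: coeff_monom_mult coeff_map_poly power_0_left)

lemma tw_mult_const_left:
  "tw_mult q [:c:] g = smult c g"
  unfolding tw_mult_def by (simp add: monom_0 map_poly_idI)

lemma coeff_tw_mult_const_right:
  assumes "q > 0"
  shows "coeff (tw_mult q f [:c:]) k = coeff f k * c ^ (q ^ k)"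
proof -
  have "coeff (tw_mult q f [:c:]) k =
    (\<Sum>i\<le>degree f. (if i = k then coeff f k * c ^ (q ^ k) else 0))"
    unfolding coeff_tw_mult[OF assms]
    using assms by (intro sum.cong refl) (auto simp: coeff_pCons power_0_left split: nat.splits)
  also have "\<dots> = coeff f k * c ^ (q ^ k)"
    by (auto simp: coeff_eq_0)
  finally show ?thesis .
qed

lemma tw_mult_zero_left: "tw_mult q 0 g = 0"
  unfolding tw_mult_def by simp

lemma tw_mult_zero_right: "tw_mult q f 0 = 0"
  unfolding tw_mult_def by simp

lemma unit_const:
  fixes u :: "'k::field poly"
  assumes "q > 0" "tw_unit q u"
  shows "\<exists>c. c \<noteq> 0 \<and> u = [:c:]"
proof -
  obtain w where w: "tw_mult q u w = 1" using assms(2) unfolding tw_unit_def by blast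
  have u0: "u \<noteq> 0" using w by (auto simp: tw_mult_zero_left)
  have w0: "w \<noteq> 0" using w by (auto simp: tw_mult_zero_right)
  define k where "k = degree u + degree w"
  have "coeff (tw_mult q u w) k =
     (\<Sum>i\<le>degree u. (if i = degree u then lead_coeff u * lead_coeff w ^ (q ^ degree u) else 0))"
    unfolding coeff_tw_mult[OF assms(1)]
  proof (intro sum.cong refl)
    fix i assume "i \<in> {..degree u}"
    then have "i \<le> degree u" by simp
    show "coeff u i * (if i \<le> k then coeff w (k - i) ^ q ^ i else 0) =
      (if i = degree u then lead_coeff u * lead_coeff w ^ q ^ degree u else 0)"
    proof (cases "i = degree u")
      case True then show ?thesis by (simp add: k_def)
    next
      case False
      then have "k - i > degree w" using \<open>i \<le> degree u\<close> by (simp add: k_def)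
      then have "coeff w (k - i) = 0" by (simp add: coeff_eq_0)
      then show ?thesis using False assms(1) by simp
    qed
  qed
  also have "\<dots> = lead_coeff u * lead_coeff w ^ (q ^ degree u)" by simp
  finally have "coeff 1 k \<noteq> (0::'k)" using w u0 w0 by simp
  then have "k = 0" by (simp add: one_pCons coeff_pCons split: nat.splits)
  then have "degree u = 0" by (simp add: k_def)
  then have "u = [:coeff u 0:]" by (rule degree_0_id[symmetric])
  moreover have "coeff u 0 \<noteq> 0" using u0 \<open>degree u = 0\<close> leading_coeff_0_iff by fastforce
  ultimately show ?thesis by blast
qed


lemma of_nat_mod_CHAR: "(of_nat (n mod CHAR('k)) :: 'k::comm_ring_1) = of_nat n"
  by (simp add: of_nat_eq_iff_cong_CHAR cong_def)

lemma shift_sub: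
  fixes x y :: "'k::comm_ring_1"
  assumes "x + of_nat a = y + of_nat b" "a < CHAR('k)" "b < CHAR('k)"
  shows "(+) x ` (of_nat ` {..<CHAR('k)}) \<subseteq> (+) y ` (of_nat ` {..<CHAR('k)})"
proof
  fix z assume "z \<in> (+) x ` (of_nat ` {..<CHAR('k)})"
  then obtain c where c: "c < CHAR('k)" "z = x + of_nat c" by auto
  define j where "j = (b + c + (CHAR('k) - a)) mod CHAR('k)"
  have jlt: "j < CHAR('k)" unfolding j_def using assms(2) by simp
  have "(of_nat j :: 'k) = of_nat (b + c + (CHAR('k) - a))" unfolding j_def by (rule of_nat_mod_CHAR)
  also have "\<dots> = of_nat b + of_nat c + (of_nat CHAR('k) - of_nat a)"
    using assms(2) by (simp add: of_nat_diff)
  also have "\<dots> = of_nat b + of_nat c - of_nat a" by simp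
  finally have "z = y + of_nat j" using c assms(1)
    by (simp add: algebra_simps) (metis add_diff_cancel_right' add.commute add.left_commute)
  then show "z \<in> (+) y ` (of_nat ` {..<CHAR('k)})" using jlt by auto
qed

theorem lemma2p5:
  fixes \<phi> :: "'a::comm_ring_1 \<Rightarrow> 'k::{finite,field} poly"
    and v :: "'a \<Rightarrow> int" and p q n m dinf r :: nat
  assumes "prime p" and "CHAR('k) = p"
    and "n \<ge> 1" and "q = p ^ n" and "m \<ge> 1" and "card (UNIV :: 'k set) = q ^ m"
    and "dinf \<ge> 1" and "r \<ge> 1"
    and "drinfeld_module q v dinf r \<phi>"
  shows "[int (card (drinfeld_aut q \<phi>)) = - 1] (mod int p)"
proof -
  have q0: "q > 0" using assms(1,4) prime_gt_0_nat by simp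
  have frob: "(x + y) ^ (q ^ i) = x ^ (q ^ i) + y ^ (q ^ i)" for x y :: 'k and i
    by (rule freshmans_dream'[where n = "n * i"]) (use assms(1,2,4) in \<open>simp_all add: power_mult\<close>)
  define K where "K = {c::'k. \<forall>a i. c * coeff (\<phi> a) i = coeff (\<phi> a) i * c ^ (q ^ i)}"
  have K0: "0 \<in> K" unfolding K_def using q0 by (simp add: power_0_left)
  have K1: "1 \<in> K" unfolding K_def by simp
  have Kadd: "x + y \<in> K" if "x \<in> K" "y \<in> K" for x y
    using that unfolding K_def by (simp add: frob) metis
  have Knat: "of_nat j \<in> K" for j
    by (induction j) (simp_all add: K0 K1 Kadd)
  have aut: "drinfeld_aut q \<phi> = (\<lambda>c. [:c:]) ` (K - {0})"
  proof (intro equalityI subsetI)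
    fix u assume "u \<in> drinfeld_aut q \<phi>"
    then have u: "tw_unit q u" "\<And>a. tw_mult q u (\<phi> a) = tw_mult q (\<phi> a) u"
      unfolding drinfeld_aut_def by auto
    obtain c where c: "c \<noteq> 0" "u = [:c:]" using unit_const[OF q0 u(1)] by blast
    have "c \<in> K" unfolding K_def mem_Collect_eq
    proof (intro allI)
      fix a i
      have "coeff (tw_mult q u (\<phi> a)) i = coeff (tw_mult q (\<phi> a) u) i" using u(2) by simp
      then show "c * coeff (\<phi> a) i = coeff (\<phi> a) i * c ^ q ^ i"
        using c(2) by (simp add: tw_mult_const_left coeff_tw_mult_const_right[OF q0])
    qed
    then show "u \<in> (\<lambda>c. [:c:]) ` (K - {0})" using c by auto
  next
    fix u assume "u \<in> (\<lambda>c. [:c:]) ` (K - {0})"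
    then obtain c where c: "c \<in> K" "c \<noteq> 0" "u = [:c:]" by auto
    have "tw_unit q u" unfolding tw_unit_def c(3)
      by (rule exI[of _ "[:inverse c:]"]) (simp add: tw_mult_const_left c(2) one_pCons)
    moreover have "tw_mult q u (\<phi> a) = tw_mult q (\<phi> a) u" for a
      by (rule poly_eqI) (use c in \<open>simp add: tw_mult_const_left coeff_tw_mult_const_right[OF q0] K_def\<close>)
    ultimately show "u \<in> drinfeld_aut q \<phi>" unfolding drinfeld_aut_def by auto
  qed
  have cardA: "card (drinfeld_aut q \<phi>) = card K - 1"
    unfolding aut by (subst card_image) (auto simp: inj_on_def K0)
  define P where "P = (of_nat ` {..<p} :: 'k set)"
  have cardP: "card P = p" unfolding P_def
    by (subst card_image) (auto simp: inj_on_def of_nat_eq_iff_cong_CHAR cong_def assms(2))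
  define C where "C = (\<lambda>x. (+) x ` P) ` K"
  have UC: "\<Union>C = K"
  proof (intro equalityI subsetI)
    fix z assume "z \<in> \<Union>C"
    then show "z \<in> K" unfolding C_def P_def using Kadd Knat by auto
  next
    fix z assume "z \<in> K"
    moreover have "0 \<in> {..<p}" using assms(1) prime_gt_0_nat by simp
    ultimately have "z \<in> (+) z ` P" unfolding P_def by force
    then show "z \<in> \<Union>C" unfolding C_def using \<open>z \<in> K\<close> by blast
  qed
  have "p * card C = card (\<Union>C)"
  proof (rule card_partition)
    show "finite C" "finite (\<Union>C)" by simp_all
    show "card c = p" if "c \<in> C" for c using that unfolding C_def
      using cardP by (auto simp: card_image)
    show "c1 \<inter> c2 = {}" if "c1 \<in> C" "c2 \<in> C" "c1 \<noteq> c2" for c1 c2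
    proof -
      from that obtain x y where xy: "c1 = (+) x ` P" "c2 = (+) y ` P" unfolding C_def by auto
      show "c1 \<inter> c2 = {}"
      proof (rule ccontr)
        assume "c1 \<inter> c2 \<noteq> {}"
        then obtain a b where ab: "a < p" "b < p" "x + of_nat a = y + of_nat b"
          unfolding xy P_def by auto
        have "c1 \<subseteq> c2" unfolding xy P_def using shift_sub[of x a y b] ab assms(2) by simp
        moreover have "c2 \<subseteq> c1" unfolding xy P_def using shift_sub[of y b x a] ab assms(2) by simp
        ultimately show False using that(3) by simp
      qed
    qed
  qed
  then have dvd: "p dvd card K" using UC by (metis dvd_triv_left)
  have "card K \<ge> 1" using K0 by (metis One_nat_def Suc_leI card_gt_0_iff empty_iff finite)
  then have "int (card (drinfeld_aut q \<phi>)) = int (card K) - 1" using cardA by simp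
  then show ?thesis using dvd
    by (simp add: cong_iff_dvd_diff)
qed

end
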